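(* Let $R$ be the ring of integers of a nonarchimedean local field $F$ of characteristic not $2$ in which $2$ is a prime element of $R$. For every positive integer $n$, the minimal rank of an even $R$-lattice that primitively represents all even $R$-lattices of rank $n$ is exactly $2n$.
   Context: An $R$-lattice is a finitely generated $R$-submodule $L$ of a quadratic space $(V,B)$ over $F$ with $Q(v)=B(v,v)$, assumed integral ($B(L,L)\subseteq R$) and nondegenerate. $L$ is even if $Q(L)\subseteq 2R$. A representation of $L$ into $M$ is an $R$-linear map preserving $B$; it is primitive if its image is a direct summand of $M$. *)

theory Defs
  imports Main
begin

text \<open>A normalized discrete valuation on a field: defined on nonzero elements
(the value at 0 is irrelevant and never used).\<close>
definition discrete_valuation :: "('a::field \<Rightarrow> int) \<Rightarrow> bool" where
  "discrete_valuation v \<longleftrightarrow>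
     (\<forall>x y. x \<noteq> 0 \<longrightarrow> y \<noteq> 0 \<longrightarrow> v (x * y) = v x + v y) \<and>
     (\<forall>x y. x \<noteq> 0 \<longrightarrow> y \<noteq> 0 \<longrightarrow> x + y \<noteq> 0 \<longrightarrow> v (x + y) \<ge> min (v x) (v y)) \<and>
     (\<forall>k. \<exists>x. x \<noteq> 0 \<and> v x = k)"

definition int_ring :: "('a::field \<Rightarrow> int) \<Rightarrow> 'a set" where
  "int_ring v = {x. x = 0 \<or> v x \<ge> 0}"

definition vclose :: "('a::field \<Rightarrow> int) \<Rightarrow> int \<Rightarrow> 'a \<Rightarrow> 'a \<Rightarrow> bool" where
  "vclose v N x y \<longleftrightarrow> x = y \<or> v (x - y) \<ge> N"

definition vcomplete :: "('a::field \<Rightarrow> int) \<Rightarrow> bool" where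
  "vcomplete v \<longleftrightarrow>
     (\<forall>a :: nat \<Rightarrow> 'a.
        (\<forall>N. \<exists>K. \<forall>i\<ge>K. \<forall>j\<ge>K. vclose v N (a i) (a j)) \<longrightarrow>
        (\<exists>l. \<forall>N. \<exists>K. \<forall>i\<ge>K. vclose v N (a i) l))"

definition finite_residue_field :: "('a::field \<Rightarrow> int) \<Rightarrow> bool" where
  "finite_residue_field v \<longleftrightarrow>
     (\<exists>S. finite S \<and> S \<subseteq> int_ring v \<and> (\<forall>x\<in>int_ring v. \<exists>s\<in>S. vclose v 1 x s))"

definition nonarch_local_field :: "('a::field \<Rightarrow> int) \<Rightarrow> bool" where
  "nonarch_local_field v \<longleftrightarrow> discrete_valuation v \<and> vcomplete v \<and> finite_residue_field v"

definition dvd_in :: "'a::field set \<Rightarrow> 'a \<Rightarrow> 'a \<Rightarrow> bool" where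
  "dvd_in R a b \<longleftrightarrow> (\<exists>c\<in>R. b = a * c)"

definition prime_elem_in :: "'a::field set \<Rightarrow> 'a \<Rightarrow> bool" where
  "prime_elem_in R p \<longleftrightarrow> p \<in> R \<and> p \<noteq> 0 \<and> \<not> dvd_in R p 1 \<and>
     (\<forall>a\<in>R. \<forall>b\<in>R. dvd_in R p (a * b) \<longrightarrow> dvd_in R p a \<or> dvd_in R p b)"

definition Rmod :: "'a::field set \<Rightarrow> nat \<Rightarrow> (nat \<Rightarrow> 'a) set" where
  "Rmod R m = {x. (\<forall>i. x i \<in> R) \<and> (\<forall>i\<ge>m. x i = 0)}"

definition bform :: "nat \<Rightarrow> (nat \<Rightarrow> nat \<Rightarrow> 'a::field) \<Rightarrow> (nat \<Rightarrow> 'a) \<Rightarrow> (nat \<Rightarrow> 'a) \<Rightarrow> 'a" where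
  "bform m G x y = (\<Sum>i<m. \<Sum>j<m. x i * G i j * y j)"

definition is_lattice :: "('a::field \<Rightarrow> int) \<Rightarrow> nat \<Rightarrow> (nat \<Rightarrow> nat \<Rightarrow> 'a) \<Rightarrow> bool" where
  "is_lattice v m G \<longleftrightarrow>
     (\<forall>i<m. \<forall>j<m. G i j = G j i) \<and>
     (\<forall>x\<in>Rmod (int_ring v) m. \<forall>y\<in>Rmod (int_ring v) m. bform m G x y \<in> int_ring v) \<and>
     (\<forall>x\<in>Rmod (int_ring v) m. (\<forall>y\<in>Rmod (int_ring v) m. bform m G x y = 0) \<longrightarrow> x = (\<lambda>_. 0))"

definition even_lattice :: "('a::field \<Rightarrow> int) \<Rightarrow> nat \<Rightarrow> (nat \<Rightarrow> nat \<Rightarrow> 'a) \<Rightarrow> bool" where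
  "even_lattice v m G \<longleftrightarrow> is_lattice v m G \<and>
     (\<forall>x\<in>Rmod (int_ring v) m. \<exists>r\<in>int_ring v. bform m G x x = 2 * r)"

definition submodule_of :: "'a::field set \<Rightarrow> (nat \<Rightarrow> 'a) set \<Rightarrow> (nat \<Rightarrow> 'a) set \<Rightarrow> bool" where
  "submodule_of R N M \<longleftrightarrow> N \<subseteq> M \<and> (\<lambda>_. 0) \<in> N \<and>
     (\<forall>x\<in>N. \<forall>y\<in>N. (\<lambda>i. x i + y i) \<in> N) \<and> (\<forall>r\<in>R. \<forall>x\<in>N. (\<lambda>i. r * x i) \<in> N)"

definition direct_summand :: "'a::field set \<Rightarrow> (nat \<Rightarrow> 'a) set \<Rightarrow> (nat \<Rightarrow> 'a) set \<Rightarrow> bool" where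
  "direct_summand R S M \<longleftrightarrow> (\<exists>N. submodule_of R N M \<and>
     (\<forall>z\<in>M. \<exists>u\<in>S. \<exists>w\<in>N. z = (\<lambda>i. u i + w i)) \<and> S \<inter> N = {\<lambda>_. 0})"

definition representation ::
  "('a::field \<Rightarrow> int) \<Rightarrow> nat \<Rightarrow> (nat \<Rightarrow> nat \<Rightarrow> 'a) \<Rightarrow> nat \<Rightarrow> (nat \<Rightarrow> nat \<Rightarrow> 'a)
     \<Rightarrow> ((nat \<Rightarrow> 'a) \<Rightarrow> (nat \<Rightarrow> 'a)) \<Rightarrow> bool" where
  "representation v n A m G \<sigma> \<longleftrightarrow>
     \<sigma> ` Rmod (int_ring v) n \<subseteq> Rmod (int_ring v) m \<and>
     (\<forall>x\<in>Rmod (int_ring v) n. \<forall>y\<in>Rmod (int_ring v) n. \<sigma> (\<lambda>i. x i + y i) = (\<lambda>i. \<sigma> x i + \<sigma> y i)) \<and>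
     (\<forall>r\<in>int_ring v. \<forall>x\<in>Rmod (int_ring v) n. \<sigma> (\<lambda>i. r * x i) = (\<lambda>i. r * \<sigma> x i)) \<and>
     (\<forall>x\<in>Rmod (int_ring v) n. \<forall>y\<in>Rmod (int_ring v) n. bform m G (\<sigma> x) (\<sigma> y) = bform n A x y)"

definition prim_represents ::
  "('a::field \<Rightarrow> int) \<Rightarrow> nat \<Rightarrow> (nat \<Rightarrow> nat \<Rightarrow> 'a) \<Rightarrow> nat \<Rightarrow> (nat \<Rightarrow> nat \<Rightarrow> 'a) \<Rightarrow> bool" where
  "prim_represents v n A m G \<longleftrightarrow> (\<exists>\<sigma>. representation v n A m G \<sigma> \<and>
     direct_summand (int_ring v) (\<sigma> ` Rmod (int_ring v) n) (Rmod (int_ring v) m))"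

definition prim_universal_even :: "('a::field \<Rightarrow> int) \<Rightarrow> nat \<Rightarrow> nat \<Rightarrow> (nat \<Rightarrow> nat \<Rightarrow> 'a) \<Rightarrow> bool" where
  "prim_universal_even v n m G \<longleftrightarrow>
     (\<forall>A. even_lattice v n A \<longrightarrow> prim_represents v n A m G)"

end

theory Submission
  imports Defs
begin


definition vge :: "('a::field \<Rightarrow> int) \<Rightarrow> int \<Rightarrow> 'a \<Rightarrow> bool" where
  "vge v N x \<longleftrightarrow> x = 0 \<or> N \<le> v x"

context
  fixes v :: "'a::field \<Rightarrow> int"
  assumes dv: "discrete_valuation v"
begin

lemma v_mult: "x \<noteq> 0 \<Longrightarrow> y \<noteq> 0 \<Longrightarrow> v (x * y) = v x + v y"
  using dv unfolding discrete_valuation_def by blast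

lemma v_add: "x \<noteq> 0 \<Longrightarrow> y \<noteq> 0 \<Longrightarrow> x + y \<noteq> 0 \<Longrightarrow> v (x + y) \<ge> min (v x) (v y)"
  using dv unfolding discrete_valuation_def by blast

lemma v_surj: "\<exists>x. x \<noteq> 0 \<and> v x = k"
  using dv unfolding discrete_valuation_def by blast

lemma v_one: "v 1 = 0"
  using v_mult[of 1 1] by simp

lemma v_neg1: "v (-1) = 0"
  using v_mult[of "-1" "-1"] v_one by simp

lemma v_neg: "v (- x) = v x"
proof (cases "x = 0")
  case False
  then show ?thesis using v_mult[of "-1" x] v_neg1 by simp
qed simp

lemma vge_add: "vge v N x \<Longrightarrow> vge v N y \<Longrightarrow> vge v N (x + y)"
  unfolding vge_def using v_add[of x y] by fastforce

lemma vge_neg: "vge v N x \<Longrightarrow> vge v N (- x)"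
  unfolding vge_def using v_neg by auto

lemma vge_diff: "vge v N x \<Longrightarrow> vge v N y \<Longrightarrow> vge v N (x - y)"
  using vge_add[of N x "-y"] vge_neg[of N y] by simp

lemma vge_mult: "vge v a x \<Longrightarrow> vge v b y \<Longrightarrow> vge v (a + b) (x * y)"
proof -
  assume a: "vge v a x" and b: "vge v b y"
  show ?thesis
  proof (cases "x = 0 \<or> y = 0")
    case True then show ?thesis by (auto simp: vge_def)
  next
    case False
    then have "v (x * y) = v x + v y" using v_mult by blast
    then show ?thesis using a b False unfolding vge_def by simp
  qed
qed

lemma vge_mono: "N' \<le> N \<Longrightarrow> vge v N x \<Longrightarrow> vge v N' x"
  unfolding vge_def by auto

lemma vge_zero[simp]: "vge v N 0"
  unfolding vge_def by auto

lemma vge_sum: "(\<And>i. i \<in> A \<Longrightarrow> vge v N (f i)) \<Longrightarrow> vge v N (sum f A)"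
proof (induction A rule: infinite_finite_induct)
  case (insert x F)
  then show ?case by (simp add: vge_add)
qed auto

lemma int_ring_vge: "x \<in> int_ring v \<longleftrightarrow> vge v 0 x"
  unfolding int_ring_def vge_def by auto

lemma R_add: "x \<in> int_ring v \<Longrightarrow> y \<in> int_ring v \<Longrightarrow> x + y \<in> int_ring v"
  unfolding int_ring_vge by (rule vge_add)
lemma R_mult: "x \<in> int_ring v \<Longrightarrow> y \<in> int_ring v \<Longrightarrow> x * y \<in> int_ring v"
  unfolding int_ring_vge using vge_mult[of 0 x 0 y] by simp
lemma R_neg: "x \<in> int_ring v \<Longrightarrow> - x \<in> int_ring v"
  unfolding int_ring_vge by (rule vge_neg)
lemma R_diff: "x \<in> int_ring v \<Longrightarrow> y \<in> int_ring v \<Longrightarrow> x - y \<in> int_ring v"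
  unfolding int_ring_vge by (rule vge_diff)
lemma R_sum: "(\<And>i. i \<in> A \<Longrightarrow> f i \<in> int_ring v) \<Longrightarrow> sum f A \<in> int_ring v"
  unfolding int_ring_vge by (rule vge_sum)
lemma R_0[simp]: "0 \<in> int_ring v" by (simp add: int_ring_def)
lemma R_1[simp]: "1 \<in> int_ring v" by (simp add: int_ring_def v_one)
lemma R_2: "2 \<in> int_ring v"
proof -
  have "(2::'a) = 1 + 1" by simp
  then show ?thesis using R_add[OF R_1 R_1] by metis
qed

lemma v_power: "x \<noteq> 0 \<Longrightarrow> v (x ^ k) = int k * v x"
  by (induction k) (auto simp: v_one v_mult algebra_simps)

lemma v_inverse: "x \<noteq> 0 \<Longrightarrow> v (inverse x) = - v x"
  using v_mult[of x "inverse x"] v_one by simp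

end


lemma exists_dep:
  fixes u :: "nat \<Rightarrow> nat \<Rightarrow> 'a::field"
  assumes "finite I" "m < card I"
  shows "\<exists>a. (\<exists>k\<in>I. a k \<noteq> 0) \<and> (\<forall>i<m. (\<Sum>k\<in>I. a k * u k i) = 0)"
  using assms
proof (induction m arbitrary: I u)
  case 0
  then obtain k where "k \<in> I" by fastforce
  then show ?case by (rule_tac x="\<lambda>x. if x = k then 1 else 0" in exI) auto
next
  case (Suc m)
  show ?case
  proof (cases "\<forall>k\<in>I. u k m = 0")
    case True
    from Suc.IH[of I u] Suc.prems obtain a where a: "\<exists>k\<in>I. a k \<noteq> 0" "\<forall>i<m. (\<Sum>k\<in>I. a k * u k i) = 0"
      by auto
    show ?thesis
    proof (rule exI[of _ a], intro conjI allI impI)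
      fix i assume "i < Suc m"
      then show "(\<Sum>k\<in>I. a k * u k i) = 0"
        using a True by (cases "i = m") auto
    qed (use a(1) in blast)
  next
    case False
    then obtain k0 where k0: "k0 \<in> I" "u k0 m \<noteq> 0" by blast
    define I' where "I' = I - {k0}"
    define u' where "u' k i = u k i - (u k m / u k0 m) * u k0 i" for k i
    have fI': "finite I'" using Suc.prems by (simp add: I'_def)
    have cI': "m < card I'" using Suc.prems k0 by (simp add: I'_def)
    from Suc.IH[OF fI' cI', of u'] obtain a' where
      a': "\<exists>k\<in>I'. a' k \<noteq> 0" "\<forall>i<m. (\<Sum>k\<in>I'. a' k * u' k i) = 0" by blast
    define a where "a k = (if k = k0 then - (\<Sum>k\<in>I'. a' k * u k m) / u k0 m else a' k)" for k
    have split: "(\<Sum>k\<in>I. f k) = f k0 + (\<Sum>k\<in>I'. f k)" for f :: "nat \<Rightarrow> 'a"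
      using Suc.prems(1) k0 unfolding I'_def by (simp add: sum.remove)
    have eq: "(\<Sum>k\<in>I. a k * u k i) = (\<Sum>k\<in>I'. a' k * u' k i)" for i
    proof -
      have "(\<Sum>k\<in>I'. a' k * u' k i) = (\<Sum>k\<in>I'. a' k * u k i) - (\<Sum>k\<in>I'. a' k * u k m) / u k0 m * u k0 i"
        unfolding u'_def right_diff_distrib sum_subtractf sum_divide_distrib sum_distrib_right
        by (auto simp: mult_ac intro!: sum.cong)
      moreover have "(\<Sum>k\<in>I'. a k * u k i) = (\<Sum>k\<in>I'. a' k * u k i)"
        by (rule sum.cong) (auto simp: a_def I'_def)
      moreover have "(\<Sum>k\<in>I. a k * u k i) = a k0 * u k0 i + (\<Sum>k\<in>I'. a k * u k i)"
        by (rule split)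
      moreover have "a k0 = - (\<Sum>k\<in>I'. a' k * u k m) / u k0 m" by (simp add: a_def)
      ultimately have "(\<Sum>k\<in>I. a k * u k i) = (\<Sum>k\<in>I'. a' k * u k i) - (\<Sum>k\<in>I'. a' k * u k m) / u k0 m * u k0 i"
        "(\<Sum>k\<in>I'. a' k * u' k i) = (\<Sum>k\<in>I'. a' k * u k i) - (\<Sum>k\<in>I'. a' k * u k m) / u k0 m * u k0 i"
        by (simp_all add: algebra_simps)
      then show ?thesis by simp
    qed
    have um: "u' k m = 0" for k unfolding u'_def using k0 by simp
    show ?thesis
    proof (rule exI[of _ a], intro conjI allI impI)
      from a'(1) obtain k where k: "k \<in> I'" "a' k \<noteq> 0" by blast
      then have "k \<in> I" "k \<noteq> k0" by (auto simp: I'_def)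
      then show "\<exists>k\<in>I. a k \<noteq> 0" using k(2) by (intro bexI[of _ k]) (simp_all add: a_def)
      fix i assume i: "i < Suc m"
      show "(\<Sum>k\<in>I. a k * u k i) = 0"
      proof (cases "i = m")
        case True
        then show ?thesis unfolding eq by (simp add: um)
      next
        case False
        then show ?thesis unfolding eq using a'(2) i by simp
      qed
    qed
  qed
qed



definition unitv :: "nat \<Rightarrow> nat \<Rightarrow> 'a::field" where
  "unitv k = (\<lambda>t. if t = k then 1 else 0)"

lemma if10_mult: "(if P then 1 else 0) * (X::'a::field) = (if P then X else 0)" by simp
lemma mult_if10: "(X::'a::field) * (if P then 1 else 0) = (if P then X else 0)" by simp

lemma bform_alt: "bform m G x y = (\<Sum>i<m. x i * (\<Sum>j<m. G i j * y j))"
  unfolding bform_def by (simp add: sum_distrib_left mult.assoc)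

lemma bform_alt2: "bform m G x y = (\<Sum>j<m. (\<Sum>i<m. x i * G i j) * y j)"
  unfolding bform_def by (subst sum.swap) (simp add: sum_distrib_right)

lemma bform_e2: "j < m \<Longrightarrow> bform m G x (unitv j) = (\<Sum>i<m. x i * G i j)"
  unfolding bform_alt2 unitv_def by (simp add: if_distrib cong: if_cong)

lemma bform_e1: "i < m \<Longrightarrow> bform m G (unitv i) y = (\<Sum>j<m. G i j * y j)"
  unfolding bform_alt unitv_def by (simp add: if10_mult cong: if_cong)

lemma bform_ee: "i < m \<Longrightarrow> j < m \<Longrightarrow> bform m G (unitv i) (unitv j) = G i j"
  unfolding bform_e1 by (simp add: unitv_def mult_if10 cong: if_cong)

lemma bform_cong: "(\<And>t. t < m \<Longrightarrow> x t = x' t) \<Longrightarrow> (\<And>t. t < m \<Longrightarrow> y t = y' t) \<Longrightarrow>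
   bform m G x y = bform m G x' y'"
  unfolding bform_def by (intro sum.cong) auto

lemma bform_lin2: "bform m G x (\<lambda>t. \<Sum>k\<in>K. a k * Y k t) = (\<Sum>k\<in>K. a k * bform m G x (Y k))"
  unfolding bform_def sum_distrib_left
  by (subst sum.swap, rule sum.cong, simp, subst sum.swap, rule sum.cong, simp, rule sum.cong, simp_all add: mult_ac)

lemma bform_lin1: "bform m G (\<lambda>t. \<Sum>k\<in>K. a k * Y k t) y = (\<Sum>k\<in>K. a k * bform m G (Y k) y)"
  unfolding bform_def sum_distrib_left sum_distrib_right
  by (subst sum.swap, rule sum.cong, simp, subst sum.swap, rule sum.cong, simp, rule sum.cong, simp_all add: mult_ac)

lemma bform_sym: "(\<And>i j. i < m \<Longrightarrow> j < m \<Longrightarrow> G i j = G j i) \<Longrightarrow> bform m G x y = bform m G y x"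
  unfolding bform_def by (subst sum.swap) (auto simp: mult_ac intro!: sum.cong)

lemma unitv_Rmod: "discrete_valuation v \<Longrightarrow> k < m \<Longrightarrow> unitv k \<in> Rmod (int_ring v) m"
  unfolding Rmod_def unitv_def using R_1[of v] by auto



definition G0 :: "nat \<Rightarrow> nat \<Rightarrow> nat \<Rightarrow> 'a::field" where
  "G0 n i j = (if i < 2 * n \<and> j < 2 * n \<and> (i = j + n \<or> j = i + n) then 1 else 0)"

lemma sum_2n: "(\<Sum>i<2 * (n::nat). f i) = (\<Sum>i<n. f i) + (\<Sum>i<n. f (i + n))"
proof -
  have "{..<2 * n} = {..<n} \<union> {n..<n + n}" by auto
  then have "(\<Sum>i<2 * n. f i) = (\<Sum>i<n. f i) + (\<Sum>i\<in>{n..<n + n}. f i)"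
    by (metis sum.union_disjoint finite_lessThan finite_atLeastLessThan ivl_disj_int_one(2))
  also have "(\<Sum>i\<in>{n..<n + n}. f i) = (\<Sum>i\<in>{0..<n}. f (i + n))"
    using sum.shift_bounds_nat_ivl[of f 0 n n] by simp
  finally show ?thesis by (simp add: atLeast0LessThan)
qed

lemma bform_G0: "bform (2 * n) (G0 n) x y = (\<Sum>i<n. x i * y (i + n) + x (i + n) * y i)"
proof -
  have inner: "(\<Sum>j<2 * n. G0 n i j * y j) = (if i < n then y (i + n) else y (i - n))" if "i < 2 * n" for i
  proof -
    have "(\<Sum>j<2 * n. G0 n i j * y j) = (\<Sum>j<2 * n. if j = (if i < n then i + n else i - n) then y j else 0)"
      using that by (intro sum.cong) (auto simp: G0_def)
    also have "\<dots> = (if i < n then y (i + n) else y (i - n))"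
    proof -
      have "(if i < n then i + n else i - n) < 2 * n" using that by auto
      then show ?thesis by (simp only: sum.delta finite_lessThan lessThan_iff if_True) (simp split: if_split)
    qed
    finally show ?thesis .
  qed
  have "bform (2 * n) (G0 n) x y = (\<Sum>i<2 * n. x i * (if i < n then y (i + n) else y (i - n)))"
    unfolding bform_alt by (intro sum.cong) (simp_all add: inner)
  also have "\<dots> = (\<Sum>i<n. x i * y (i + n)) + (\<Sum>i<n. x (i + n) * y i)"
    unfolding sum_2n by simp
  finally show ?thesis by (simp add: sum.distrib)
qed

lemma Rmod_R: "x \<in> Rmod R m \<Longrightarrow> x i \<in> R"
  unfolding Rmod_def by auto
lemma Rmod_0: "x \<in> Rmod R m \<Longrightarrow> m \<le> i \<Longrightarrow> x i = 0"
  unfolding Rmod_def by auto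

context
  fixes v :: "'a::field \<Rightarrow> int"
  assumes dv: "discrete_valuation v"
begin

lemma G0_even: "even_lattice v (2 * n) (G0 n)"
  unfolding even_lattice_def is_lattice_def
proof (intro conjI ballI allI impI)
  fix i j assume "i < 2 * n" "j < 2 * n"
  then show "G0 n i j = G0 n j i" unfolding G0_def by auto
next
  fix x y assume x: "x \<in> Rmod (int_ring v) (2 * n)" and y: "y \<in> Rmod (int_ring v) (2 * n)"
  show "bform (2 * n) (G0 n) x y \<in> int_ring v"
    unfolding bform_G0 using dv x y
    by (intro R_sum R_add R_mult) (auto intro: Rmod_R)
next
  fix x assume x: "x \<in> Rmod (int_ring v) (2 * n)"
  show "\<exists>r\<in>int_ring v. bform (2 * n) (G0 n) x x = 2 * r"
  proof
    show "(\<Sum>i<n. x i * x (i + n)) \<in> int_ring v"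
      using dv x by (intro R_sum R_mult) (auto intro: Rmod_R)
    show "bform (2 * n) (G0 n) x x = 2 * (\<Sum>i<n. x i * x (i + n))"
      unfolding bform_G0 sum_distrib_left by (intro sum.cong) (simp_all add: algebra_simps)
  qed
next
  fix x assume x: "x \<in> Rmod (int_ring v) (2 * n)"
    and z: "\<forall>y\<in>Rmod (int_ring v) (2 * n). bform (2 * n) (G0 n) x y = 0"
  show "x = (\<lambda>_. 0)"
  proof
    fix i
    show "x i = 0"
    proof (cases "i < n")
      case True
      have "bform (2 * n) (G0 n) x (unitv (i + n)) = 0"
        using z unitv_Rmod[OF dv] True by auto
      moreover have "bform (2 * n) (G0 n) x (unitv (i + n)) = (\<Sum>k<n. if k = i then x k else 0)"
        unfolding bform_G0 by (intro sum.cong) (auto simp: unitv_def)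
      ultimately show ?thesis using True by simp
    next
      case False
      show ?thesis
      proof (cases "i < 2 * n")
        case True
        have "bform (2 * n) (G0 n) x (unitv (i - n)) = 0"
          using z unitv_Rmod[OF dv] True False by auto
        moreover have "bform (2 * n) (G0 n) x (unitv (i - n)) = (\<Sum>k<n. if k = i - n then x (k + n) else 0)"
          unfolding bform_G0 using True False by (intro sum.cong) (auto simp: unitv_def)
        moreover have "i - n < n" "i - n + n = i" using True False by auto
        ultimately show ?thesis by simp
      next
        case False
        then show ?thesis using x by (auto intro: Rmod_0)
      qed
    qed
  qed
qed

end


lemma R0[simp]: "0 \<in> int_ring v" by (simp add: int_ring_def)

context
  fixes v :: "'a::field \<Rightarrow> int" and n :: nat and A :: "nat \<Rightarrow> nat \<Rightarrow> 'a"
  assumes dv: "discrete_valuation v" and two: "(2::'a) \<noteq> 0"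
    and evA: "even_lattice v n A"
begin

definition U :: "nat \<Rightarrow> nat \<Rightarrow> 'a" where
  "U i j = (if i < j then A i j else if i = j then A i i / 2 else 0)"

definition sig :: "(nat \<Rightarrow> 'a) \<Rightarrow> nat \<Rightarrow> 'a" where
  "sig x = (\<lambda>l. if l < n then x l else if l < 2 * n then (\<Sum>j<n. U j (l - n) * x j) else 0)"

lemma A_sym: "i < n \<Longrightarrow> j < n \<Longrightarrow> A i j = A j i"
  using evA unfolding even_lattice_def is_lattice_def by blast

lemma A_R: "i < n \<Longrightarrow> j < n \<Longrightarrow> A i j \<in> int_ring v"
  using evA unitv_Rmod[OF dv, of i n] unitv_Rmod[OF dv, of j n] bform_ee[of i n j A]
  unfolding even_lattice_def is_lattice_def by metis

lemma A_half: "i < n \<Longrightarrow> A i i / 2 \<in> int_ring v"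
proof -
  assume i: "i < n"
  obtain r where r: "r \<in> int_ring v" "bform n A (unitv i) (unitv i) = 2 * r"
    using evA unitv_Rmod[OF dv i] unfolding even_lattice_def by blast
  then have Ar: "A i i = 2 * r" using bform_ee[OF i i, of A] by simp
  have "A i i / 2 = r" unfolding Ar using two by simp
  then show ?thesis using r(1) by (simp only:)
qed

lemma U_R: "i < n \<Longrightarrow> j < n \<Longrightarrow> U i j \<in> int_ring v"
  unfolding U_def using A_R A_half by auto

lemma A_split: "i < n \<Longrightarrow> j < n \<Longrightarrow> A i j = U i j + U j i"
  unfolding U_def using A_sym two by (auto simp: field_simps)

lemma sig_Rmod: "x \<in> Rmod (int_ring v) n \<Longrightarrow> sig x \<in> Rmod (int_ring v) (2 * n)"
  unfolding Rmod_def sig_def using dv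
  by (auto intro!: R_sum R_mult U_R)

lemma sig_add: "sig (\<lambda>i. x i + y i) = (\<lambda>i. sig x i + sig y i)"
  unfolding sig_def by (auto simp: sum.distrib algebra_simps)

lemma sig_scale: "sig (\<lambda>i. r * x i) = (\<lambda>i. r * sig x i)"
  unfolding sig_def by (auto simp: sum_distrib_left algebra_simps)

lemma sig_form: "bform (2 * n) (G0 n) (sig x) (sig y) = bform n A x y"
proof -
  have "bform (2 * n) (G0 n) (sig x) (sig y) =
      (\<Sum>i<n. x i * (\<Sum>j<n. U j i * y j) + (\<Sum>j<n. U j i * x j) * y i)"
    unfolding bform_G0 by (intro sum.cong) (auto simp: sig_def)
  also have "\<dots> = (\<Sum>i<n. \<Sum>j<n. x i * U j i * y j) + (\<Sum>i<n. \<Sum>j<n. U j i * x j * y i)"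
    by (simp add: sum.distrib sum_distrib_left sum_distrib_right mult_ac)
  also have "(\<Sum>i<n. \<Sum>j<n. U j i * x j * y i) = (\<Sum>i<n. \<Sum>j<n. x i * U i j * y j)"
    by (subst sum.swap) (simp add: mult_ac)
  also have "(\<Sum>i<n. \<Sum>j<n. x i * U j i * y j) + (\<Sum>i<n. \<Sum>j<n. x i * U i j * y j)
      = (\<Sum>i<n. \<Sum>j<n. x i * A i j * y j)"
    by (simp add: sum.distrib[symmetric] A_split algebra_simps)
  finally show ?thesis unfolding bform_def .
qed

lemma G0_prim: "prim_represents v n A (2 * n) (G0 n)"
  unfolding prim_represents_def
proof (intro exI conjI)
  show "representation v n A (2 * n) (G0 n) sig"
    unfolding representation_def using sig_Rmod sig_add sig_scale sig_form by auto
  define N where "N = {z \<in> Rmod (int_ring v) (2 * n). \<forall>l<n. z l = 0}"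
  show "direct_summand (int_ring v) (sig ` Rmod (int_ring v) n) (Rmod (int_ring v) (2 * n))"
    unfolding direct_summand_def
  proof (intro exI conjI ballI)
    show "submodule_of (int_ring v) N (Rmod (int_ring v) (2 * n))"
      unfolding submodule_of_def N_def Rmod_def using dv
      by (auto intro: R_add R_mult)
    fix z assume z: "z \<in> Rmod (int_ring v) (2 * n)"
    define x where "x = (\<lambda>l. if l < n then z l else 0)"
    have x: "x \<in> Rmod (int_ring v) n" using z unfolding x_def Rmod_def by auto
    have w: "(\<lambda>i. z i - sig x i) \<in> N"
      using z sig_Rmod[OF x] dv unfolding N_def Rmod_def by (auto simp: x_def sig_def intro!: R_diff R_sum R_mult U_R)
    show "\<exists>u\<in>sig ` Rmod (int_ring v) n. \<exists>w\<in>N. z = (\<lambda>i. u i + w i)"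
      using x w by (intro bexI[of _ "sig x"] bexI[of _ "\<lambda>i. z i - sig x i"]) auto
  next
    show "sig ` Rmod (int_ring v) n \<inter> N = {\<lambda>_. 0}"
    proof
      show "{\<lambda>_. 0} \<subseteq> sig ` Rmod (int_ring v) n \<inter> N"
      proof -
        have "(\<lambda>_. 0) \<in> Rmod (int_ring v) n" unfolding Rmod_def by simp
        moreover have "sig (\<lambda>_. 0) = (\<lambda>_. 0)" unfolding sig_def by auto
        moreover have "(\<lambda>_. 0) \<in> N" unfolding N_def Rmod_def by simp
        ultimately show ?thesis by force
      qed
      show "sig ` Rmod (int_ring v) n \<inter> N \<subseteq> {\<lambda>_. 0}"
      proof
        fix u assume "u \<in> sig ` Rmod (int_ring v) n \<inter> N"
        then obtain x where x: "x \<in> Rmod (int_ring v) n" "u = sig x" "\<forall>l<n. sig x l = 0"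
          unfolding N_def by auto
        have "x = (\<lambda>_. 0)"
        proof
          fix l show "x l = 0"
            using x unfolding Rmod_def sig_def by (cases "l < n") auto
        qed
        then show "u \<in> {\<lambda>_. 0}" using x(2) unfolding sig_def by auto
      qed
    qed
  qed
qed

end


lemma Rmod_add: "discrete_valuation v \<Longrightarrow> x \<in> Rmod (int_ring v) m \<Longrightarrow> y \<in> Rmod (int_ring v) m \<Longrightarrow>
  (\<lambda>i. x i + y i) \<in> Rmod (int_ring v) m"
  unfolding Rmod_def by (auto intro: R_add)

lemma Rmod_scale: "discrete_valuation v \<Longrightarrow> r \<in> int_ring v \<Longrightarrow> x \<in> Rmod (int_ring v) m \<Longrightarrow>
  (\<lambda>i. r * x i) \<in> Rmod (int_ring v) m"
  unfolding Rmod_def by (auto intro: R_mult)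

lemma R_neg1: "discrete_valuation v \<Longrightarrow> -1 \<in> int_ring v"
  using R_neg[of v 1] R_1[of v] by simp

lemma fun_add_eq: "z = (\<lambda>i. a i + w i) \<Longrightarrow> z' = (\<lambda>i. b i + w' i) \<Longrightarrow>
  (\<lambda>i. z i + z' i) = (\<lambda>i. (a i + b i) + (w i + w' i))"
  for z a w z' b w' :: "nat \<Rightarrow> 'a::field"
  by (simp add: algebra_simps)

lemma fun_scl_eq: "z = (\<lambda>i. a i + w i) \<Longrightarrow> (\<lambda>i. r * z i) = (\<lambda>i. r * a i + r * w i)"
  for z a w :: "nat \<Rightarrow> 'a::field"
  by (simp add: algebra_simps)

lemma primitive_dual:
  fixes v :: "'a::field \<Rightarrow> int"
  assumes dv: "discrete_valuation v"
    and rep: "representation v n A m G \<sigma>"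
    and ds: "direct_summand (int_ring v) (\<sigma> ` Rmod (int_ring v) n) (Rmod (int_ring v) m)"
    and s0: "\<forall>x\<in>Rmod (int_ring v) n. \<sigma> x = (\<lambda>_. 0) \<longrightarrow> x = (\<lambda>_. 0)"
  shows "\<exists>\<alpha>. (\<forall>j. \<forall>l<m. \<alpha> j l \<in> int_ring v) \<and>
     (\<forall>k<n. \<forall>j. (\<Sum>l<m. \<sigma> (unitv k) l * \<alpha> j l) = unitv k j)"
proof -
  let ?R = "int_ring v"
  let ?Rn = "Rmod ?R n"
  let ?Rm = "Rmod ?R m"
  from ds obtain N where sub: "submodule_of ?R N ?Rm"
    and dec: "\<forall>z\<in>?Rm. \<exists>u\<in>\<sigma> ` ?Rn. \<exists>w\<in>N. z = (\<lambda>i. u i + w i)"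
    and int: "\<sigma> ` ?Rn \<inter> N = {\<lambda>_. 0}"
    unfolding direct_summand_def by blast
  have NRm: "N \<subseteq> ?Rm" and N0: "(\<lambda>_. 0) \<in> N"
    and Nadd: "\<And>x y. x \<in> N \<Longrightarrow> y \<in> N \<Longrightarrow> (\<lambda>i. x i + y i) \<in> N"
    and Nscl: "\<And>r x. r \<in> ?R \<Longrightarrow> x \<in> N \<Longrightarrow> (\<lambda>i. r * x i) \<in> N"
    using sub unfolding submodule_of_def by blast+
  have sRm: "\<And>x. x \<in> ?Rn \<Longrightarrow> \<sigma> x \<in> ?Rm"
    and sadd: "\<And>x y. x \<in> ?Rn \<Longrightarrow> y \<in> ?Rn \<Longrightarrow> \<sigma> (\<lambda>i. x i + y i) = (\<lambda>i. \<sigma> x i + \<sigma> y i)"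
    and sscl: "\<And>r x. r \<in> ?R \<Longrightarrow> x \<in> ?Rn \<Longrightarrow> \<sigma> (\<lambda>i. r * x i) = (\<lambda>i. r * \<sigma> x i)"
    using rep unfolding representation_def by blast+
  have zRn: "(\<lambda>_. 0) \<in> ?Rn" unfolding Rmod_def by simp
  have szero: "\<sigma> (\<lambda>_. 0) = (\<lambda>_. 0)"
    using sscl[OF R0 zRn] by simp
  have uniq: "x = x'" if "x \<in> ?Rn" "x' \<in> ?Rn" "w \<in> N" "w' \<in> N"
    "(\<lambda>i. \<sigma> x i + w i) = (\<lambda>i. \<sigma> x' i + w' i)" for x x' w w'
  proof -
    define y where "y = (\<lambda>i. x i + (-1) * x' i)"
    have x'': "(\<lambda>i. (-1) * x' i) \<in> ?Rn" using Rmod_scale[OF dv R_neg1[OF dv] that(2)] .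
    have yRn: "y \<in> ?Rn" unfolding y_def using Rmod_add[OF dv that(1) x''] .
    have sy: "\<sigma> y = (\<lambda>i. \<sigma> x i + (-1) * \<sigma> x' i)"
      unfolding y_def using sadd[OF that(1) x''] sscl[OF R_neg1[OF dv] that(2)] by simp
    have w'': "(\<lambda>i. w' i + (-1) * w i) \<in> N"
      using Nadd[OF that(4) Nscl[OF R_neg1[OF dv] that(3)]] .
    have "\<sigma> y = (\<lambda>i. w' i + (-1) * w i)"
    proof
      fix i
      have "\<sigma> x i + w i = \<sigma> x' i + w' i" using that(5) by meson
      then show "\<sigma> y i = w' i + (-1) * w i" unfolding sy by (simp add: algebra_simps)
    qed
    then have "\<sigma> y \<in> \<sigma> ` ?Rn \<inter> N" using yRn w'' by (metis IntI image_eqI)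
    then have "\<sigma> y = (\<lambda>_. 0)" using int by auto
    then have "y = (\<lambda>_. 0)" using s0 yRn by auto
    then show "x = x'"
    proof -
      assume "y = (\<lambda>_. 0)"
      show ?thesis
      proof
        fix i
        have "x i + (-1) * x' i = 0" using \<open>y = (\<lambda>_. 0)\<close> unfolding y_def by meson
        then show "x i = x' i" by simp
      qed
    qed
  qed
  define P where "P z = (THE x. x \<in> ?Rn \<and> (\<exists>w\<in>N. z = (\<lambda>i. \<sigma> x i + w i)))" for z
  have Pchar: "P z = x" if "x \<in> ?Rn" "w \<in> N" "z = (\<lambda>i. \<sigma> x i + w i)" for z x w
    unfolding P_def
  proof (rule the_equality)
    show "x \<in> ?Rn \<and> (\<exists>w\<in>N. z = (\<lambda>i. \<sigma> x i + w i))" using that by blast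
    fix x' assume "x' \<in> ?Rn \<and> (\<exists>w\<in>N. z = (\<lambda>i. \<sigma> x' i + w i))"
    then obtain w' where w': "x' \<in> ?Rn" "w' \<in> N" "z = (\<lambda>i. \<sigma> x' i + w' i)" by blast
    have "(\<lambda>i. \<sigma> x' i + w' i) = (\<lambda>i. \<sigma> x i + w i)" using w'(3) that(3) by (rule trans[OF sym])
    then show "x' = x" using uniq[of x' x w' w] w'(1,2) that(1,2) by blast
  qed
  have Pex: "P z \<in> ?Rn \<and> (\<exists>w\<in>N. z = (\<lambda>i. \<sigma> (P z) i + w i))" if "z \<in> ?Rm" for z
  proof -
    from dec that have "\<exists>u\<in>\<sigma> ` ?Rn. \<exists>w\<in>N. z = (\<lambda>i. u i + w i)" by (rule bspec)
    then obtain u where u: "u \<in> \<sigma> ` ?Rn" and uw: "\<exists>w\<in>N. z = (\<lambda>i. u i + w i)" ..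
    from uw obtain w where w: "w \<in> N" "z = (\<lambda>i. u i + w i)" ..
    from u obtain x where x1: "u = \<sigma> x" "x \<in> ?Rn" by (rule imageE)
    have x: "x \<in> ?Rn" "w \<in> N" "z = (\<lambda>i. \<sigma> x i + w i)" using x1 w by simp_all
    then have Pzx: "P z = x" by (rule Pchar)
    have "P z \<in> ?Rn" unfolding Pzx by (rule x(1))
    moreover have "z = (\<lambda>i. \<sigma> (P z) i + w i)" unfolding Pzx by (rule x(3))
    ultimately show ?thesis using x(2) by (intro conjI bexI[of _ w])
  qed
  have Padd: "P (\<lambda>i. z i + z' i) = (\<lambda>i. P z i + P z' i)" if "z \<in> ?Rm" "z' \<in> ?Rm" for z z'
  proof -
    have Pz: "P z \<in> ?Rn" using Pex[OF that(1)] by (rule conjunct1)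
    have Pz': "P z' \<in> ?Rn" using Pex[OF that(2)] by (rule conjunct1)
    from conjunct2[OF Pex[OF that(1)]] obtain w where w: "w \<in> N" "z = (\<lambda>i. \<sigma> (P z) i + w i)" ..
    from conjunct2[OF Pex[OF that(2)]] obtain w' where w': "w' \<in> N" "z' = (\<lambda>i. \<sigma> (P z') i + w' i)" ..
    show ?thesis
    proof (rule Pchar)
      show "(\<lambda>i. P z i + P z' i) \<in> ?Rn" using Rmod_add[OF dv Pz Pz'] .
      show "(\<lambda>i. w i + w' i) \<in> N" using Nadd[OF w(1) w'(1)] .
      show "(\<lambda>i. z i + z' i) = (\<lambda>i. \<sigma> (\<lambda>i. P z i + P z' i) i + (w i + w' i))"
        unfolding sadd[OF Pz Pz'] by (rule fun_add_eq[OF w(2) w'(2)])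
    qed
  qed
  have Pscl: "P (\<lambda>i. r * z i) = (\<lambda>i. r * P z i)" if "r \<in> ?R" "z \<in> ?Rm" for r z
  proof -
    have Pz: "P z \<in> ?Rn" using Pex[OF that(2)] by (rule conjunct1)
    from conjunct2[OF Pex[OF that(2)]] obtain w where w: "w \<in> N" "z = (\<lambda>i. \<sigma> (P z) i + w i)" ..
    show ?thesis
    proof (rule Pchar)
      show "(\<lambda>i. r * P z i) \<in> ?Rn" using Rmod_scale[OF dv that(1) Pz] .
      show "(\<lambda>i. r * w i) \<in> N" using Nscl[OF that(1) w(1)] .
      show "(\<lambda>i. r * z i) = (\<lambda>i. \<sigma> (\<lambda>i. r * P z i) i + r * w i)"
        unfolding sscl[OF that(1) Pz] by (rule fun_scl_eq[OF w(2)])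
    qed
  qed
  have Psig: "P (\<sigma> x) = x" if "x \<in> ?Rn" for x
    using Pchar[OF that N0] by simp
  have P0: "P (\<lambda>_. 0) = (\<lambda>_. 0)" using Psig[OF zRn] szero by simp
  have decomp: "P z j = (\<Sum>l<m. z l * P (unitv l) j)" if z: "z \<in> ?Rm" for z j
  proof -
    have "k \<le> m \<Longrightarrow> P (\<lambda>t. if t < k then z t else 0) j = (\<Sum>l<k. z l * P (unitv l) j)" for k
    proof (induction k)
      case 0
      then show ?case using P0 by simp
    next
      case (Suc k)
      have zk: "(\<lambda>t. if t < k then z t else 0) \<in> ?Rm" using z unfolding Rmod_def by auto
      have zR: "z k \<in> ?R" using z unfolding Rmod_def by auto
      have ek: "unitv k \<in> ?Rm" using unitv_Rmod[OF dv] Suc.prems by simp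
      have ek': "(\<lambda>t. z k * unitv k t) \<in> ?Rm" using Rmod_scale[OF dv zR ek] .
      have eq: "(\<lambda>t. if t < Suc k then z t else 0) = (\<lambda>t. (if t < k then z t else 0) + z k * unitv k t)"
      proof (rule ext)
        fix t show "(if t < Suc k then z t else 0) = (if t < k then z t else 0) + z k * unitv k t"
          by (cases "t < k"; cases "t = k") (auto simp: unitv_def)
      qed
      show ?case unfolding eq Padd[OF zk ek'] Pscl[OF zR ek] using Suc by simp
    qed
    moreover have "(\<lambda>t. if t < m then z t else 0) = z"
    proof (rule ext)
      fix t show "(if t < m then z t else 0) = z t" using z unfolding Rmod_def by auto
    qed
    ultimately show ?thesis by (metis order_refl)
  qed
  define \<alpha> where "\<alpha> j l = P (unitv l) j" for j l
  show ?thesis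
  proof (intro exI conjI allI impI)
    fix j l assume "l < m"
    then have "P (unitv l) \<in> ?Rn" using Pex unitv_Rmod[OF dv] by blast
    then show "\<alpha> j l \<in> ?R" unfolding \<alpha>_def Rmod_def by blast
  next
    fix k j assume k: "k < n"
    have ek: "unitv k \<in> ?Rn" using unitv_Rmod[OF dv k] .
    have "(\<Sum>l<m. \<sigma> (unitv k) l * \<alpha> j l) = P (\<sigma> (unitv k)) j"
      unfolding \<alpha>_def using decomp[OF sRm[OF ek]] by simp
    then show "(\<Sum>l<m. \<sigma> (unitv k) l * \<alpha> j l) = unitv k j" using Psig[OF ek] by simp
  qed
qed



lemma vbound:
  fixes v :: "'a::field \<Rightarrow> int" and f :: "'b \<Rightarrow> 'a"
  assumes "finite K"
  shows "\<exists>d::nat. \<forall>k\<in>K. vge v (- int d) (f k)"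
proof -
  define d where "d = (\<Sum>k\<in>K. nat (- v (f k)))"
  have "vge v (- int d) (f k)" if "k \<in> K" for k
  proof -
    have "nat (- v (f k)) \<le> d" unfolding d_def using assms that by (intro member_le_sum) auto
    then show ?thesis unfolding vge_def by linarith
  qed
  then show ?thesis by blast
qed

context
  fixes v :: "'a::field \<Rightarrow> int"
  assumes dv: "discrete_valuation v"
begin

lemma pi_ex: "\<exists>p. p \<noteq> 0 \<and> v p = 1"
  using v_surj[OF dv] by blast

lemma vge_pow: "p \<noteq> 0 \<Longrightarrow> v p = 1 \<Longrightarrow> vge v (int d) (p ^ d)"
  unfolding vge_def using v_power[OF dv] by simp

lemma scale_int:
  fixes a :: "nat \<Rightarrow> 'a"
  shows "\<exists>t. t \<noteq> 0 \<and> (\<forall>k<m. t * a k \<in> int_ring v)"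
proof -
  obtain d :: nat where d: "\<forall>k\<in>{..<m}. vge v (- int d) (a k)" using vbound[of "{..<m}" v a] by auto
  obtain p where p: "p \<noteq> 0" "v p = 1" using pi_ex by blast
  have "p ^ d * a k \<in> int_ring v" if "k < m" for k
    using vge_mult[OF dv vge_pow[OF p, of d] d[rule_format, of k]] that int_ring_vge[OF dv] by simp
  then show ?thesis using p by (intro exI[of _ "p ^ d"]) auto
qed

context
  fixes m :: nat and G :: "nat \<Rightarrow> nat \<Rightarrow> 'a"
  assumes lat: "is_lattice v m G"
begin

lemma G_sym: "i < m \<Longrightarrow> j < m \<Longrightarrow> G i j = G j i"
  using lat unfolding is_lattice_def by blast

lemma G_inj_F:
  assumes h: "\<forall>i<m. (\<Sum>k<m. G i k * a k) = 0"
  shows "\<forall>k<m. a k = 0"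
proof -
  obtain t where t: "t \<noteq> 0" "\<forall>k<m. t * a k \<in> int_ring v" using scale_int by blast
  define x where "x = (\<lambda>k. if k < m then t * a k else 0)"
  have x: "x \<in> Rmod (int_ring v) m" unfolding x_def Rmod_def using t by auto
  have "bform m G x y = 0" for y
  proof -
    have "(\<Sum>i<m. x i * G i j) = 0" if "j < m" for j
    proof -
      have "(\<Sum>i<m. x i * G i j) = t * (\<Sum>i<m. G j i * a i)"
        unfolding sum_distrib_left x_def using that G_sym by (intro sum.cong) (auto simp: mult_ac)
      then show ?thesis using h that by simp
    qed
    then show ?thesis unfolding bform_alt2 by simp
  qed
  then have "x = (\<lambda>_. 0)" using lat x unfolding is_lattice_def by blast
  then show ?thesis using t(1) unfolding x_def by (metis mult_eq_0_iff)
qed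

lemma solve:
  assumes l: "l < m"
  shows "\<exists>w. (\<forall>x. bform m G x w = x l) \<and> (\<forall>k. m \<le> k \<longrightarrow> w k = 0)"
proof -
  define u where "u k i = (if k < m then G i k else unitv l i)" for k i
  obtain a where a: "\<exists>k\<in>{..<Suc m}. a k \<noteq> 0" "\<forall>i<m. (\<Sum>k\<in>{..<Suc m}. a k * u k i) = 0"
    using exists_dep[of "{..<Suc m}" m u] by auto
  have expand: "(\<Sum>k\<in>{..<Suc m}. a k * u k i) = (\<Sum>k<m. G i k * a k) + a m * unitv l i" for i
    unfolding u_def by (simp add: mult_ac)
  have am: "a m \<noteq> 0"
  proof
    assume am0: "a m = 0"
    then have "\<forall>i<m. (\<Sum>k<m. G i k * a k) = 0" using a(2) expand by simp
    then have "\<forall>k<m. a k = 0" by (rule G_inj_F)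
    then show False using a(1) am0 by (auto simp: less_Suc_eq)
  qed
  define w where "w k = (if k < m then - a k / a m else 0)" for k
  have Gw: "(\<Sum>j<m. G i j * w j) = unitv l i" if "i < m" for i
  proof -
    have "(\<Sum>j<m. G i j * w j) = - (\<Sum>j<m. G i j * a j) / a m"
      unfolding w_def sum_divide_distrib sum_negf[symmetric] by (intro sum.cong) auto
    also have "(\<Sum>j<m. G i j * a j) = - a m * unitv l i" using a(2) that expand[of i]
      by (simp add: eq_neg_iff_add_eq_0)
    finally show ?thesis using am by simp
  qed
  have "bform m G x w = x l" for x
  proof -
    have "bform m G x w = (\<Sum>i<m. x i * unitv l i)" unfolding bform_alt using Gw by simp
    also have "\<dots> = x l" using l by (simp add: unitv_def mult_if10 cong: if_cong)
    finally show ?thesis .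
  qed
  then show ?thesis by (intro exI[of _ w]) (auto simp: w_def)
qed

lemma W_exists: "\<exists>W d. (\<forall>l<m. \<forall>x. bform m G x (W l) = x l) \<and> (\<forall>l k. vge v (- int d) (W l k))"
proof -
  define W where "W l = (if l < m then (SOME w. (\<forall>x. bform m G x w = x l) \<and> (\<forall>k. m \<le> k \<longrightarrow> w k = 0)) else (\<lambda>_. 0))" for l
  have W: "(\<forall>x. bform m G x (W l) = x l) \<and> (\<forall>k. m \<le> k \<longrightarrow> W l k = 0)" if "l < m" for l
    unfolding W_def using someI_ex[OF solve[OF that]] that by simp
  have W0: "W l k = 0" if "\<not> (l < m \<and> k < m)" for l k
    using W that by (cases "l < m") (auto simp: W_def)
  obtain d :: nat where d: "\<forall>p\<in>{..<m} \<times> {..<m}. vge v (- int d) (W (fst p) (snd p))"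
    using vbound[of "{..<m} \<times> {..<m}" v "\<lambda>p. W (fst p) (snd p)"] by auto
  have "vge v (- int d) (W l k)" for l k
  proof (cases "l < m \<and> k < m")
    case True then show ?thesis using d by auto
  next
    case False then show ?thesis using W0 by (simp add: vge_def)
  qed
  then show ?thesis using W by blast
qed

end
end


lemma if_c_mult: "(if P then c else 0) * (y::'a::field) = (if P then c * y else 0)" by simp

lemma lower_bound:
  fixes v :: "'a::field \<Rightarrow> int" and n m :: nat and G :: "nat \<Rightarrow> nat \<Rightarrow> 'a"
  assumes dv: "discrete_valuation v" and two: "(2::'a) \<noteq> 0"
    and evG: "even_lattice v m G" and pu: "prim_universal_even v n m G"
  shows "2 * n \<le> m"
proof (rule ccontr)
  assume "\<not> 2 * n \<le> m"
  then have small: "m < 2 * n" by simp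
  have lat: "is_lattice v m G" using evG unfolding even_lattice_def by blast
  obtain W and d :: nat where W: "\<forall>l<m. \<forall>x. bform m G x (W l) = x l"
    and Wd: "\<forall>l k. vge v (- int d) (W l k)"
    using W_exists[OF dv lat] by blast
  obtain p where p: "p \<noteq> 0" "v p = 1" using pi_ex[OF dv] by blast
  define c where "c = 2 * p ^ (d + 1)"
  have c0: "c \<noteq> 0" unfolding c_def using two p by simp
  have two_R: "vge v 0 2" using R_2[OF dv] int_ring_vge[OF dv] by simp
  have cv: "vge v (int d + 1) c"
    unfolding c_def using vge_mult[OF dv two_R vge_pow[OF dv p, of "d + 1"]] by (simp add: add.commute)
  have "vge v 0 c" using vge_mono[OF dv _ cv] by simp
  then have cR: "c \<in> int_ring v" using int_ring_vge[OF dv] by simp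
  have "vge v 0 (p ^ (d + 1))" using vge_mono[OF dv _ vge_pow[OF dv p, of "d + 1"]] by simp
  then have pR: "p ^ (d + 1) \<in> int_ring v" using int_ring_vge[OF dv] by simp
  define A where "A = (\<lambda>i j::nat. if i = j then c else (0::'a))"
  have bA: "bform n A x y = c * (\<Sum>i<n. x i * y i)" for x y
  proof -
    have "(\<Sum>j<n. A i j * y j) = c * y i" if "i < n" for i
      unfolding A_def if_c_mult using that by simp
    then have "bform n A x y = (\<Sum>i<n. x i * (c * y i))" unfolding bform_alt by (intro sum.cong) simp_all
    then show ?thesis by (simp add: sum_distrib_left mult_ac)
  qed
  have bA_e: "bform n A x (unitv i) = c * x i" if "i < n" for x i
    unfolding bA using that by (simp add: unitv_def mult_if10 cong: if_cong)
  have evA: "even_lattice v n A"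
    unfolding even_lattice_def is_lattice_def
  proof (intro conjI ballI allI impI)
    fix i j show "A i j = A j i" unfolding A_def by simp
  next
    fix x y assume "x \<in> Rmod (int_ring v) n" "y \<in> Rmod (int_ring v) n"
    then show "bform n A x y \<in> int_ring v" unfolding bA using dv cR
      by (intro R_mult R_sum) (auto intro: Rmod_R)
  next
    fix x assume x: "x \<in> Rmod (int_ring v) n"
    show "\<exists>r\<in>int_ring v. bform n A x x = 2 * r"
    proof
      show "p ^ (d + 1) * (\<Sum>i<n. x i * x i) \<in> int_ring v"
        using pR x dv by (intro R_mult R_sum) (auto intro: Rmod_R)
      show "bform n A x x = 2 * (p ^ (d + 1) * (\<Sum>i<n. x i * x i))" unfolding bA c_def by simp
    qed
  next
    fix x assume x: "x \<in> Rmod (int_ring v) n" and z: "\<forall>y\<in>Rmod (int_ring v) n. bform n A x y = 0"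
    show "x = (\<lambda>_. 0)"
    proof
      fix i show "x i = 0"
      proof (cases "i < n")
        case True
        then have "c * x i = 0" using z unitv_Rmod[OF dv True] bA_e[OF True] by metis
        then show ?thesis using c0 by simp
      next
        case False then show ?thesis using x by (auto intro: Rmod_0)
      qed
    qed
  qed
  obtain \<sigma> where rep: "representation v n A m G \<sigma>"
    and ds: "direct_summand (int_ring v) (\<sigma> ` Rmod (int_ring v) n) (Rmod (int_ring v) m)"
    using pu evA unfolding prim_universal_even_def prim_represents_def by blast
  have sform: "\<And>x y. x \<in> Rmod (int_ring v) n \<Longrightarrow> y \<in> Rmod (int_ring v) n \<Longrightarrow>
      bform m G (\<sigma> x) (\<sigma> y) = bform n A x y"
    using rep unfolding representation_def by blast
  have s0: "\<forall>x\<in>Rmod (int_ring v) n. \<sigma> x = (\<lambda>_. 0) \<longrightarrow> x = (\<lambda>_. 0)"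
  proof (intro ballI impI ext)
    fix x i assume x: "x \<in> Rmod (int_ring v) n" and sx: "\<sigma> x = (\<lambda>_. 0)"
    show "x i = 0"
    proof (cases "i < n")
      case True
      have "bform m G (\<sigma> x) (\<sigma> (unitv i)) = c * x i"
        using sform[OF x unitv_Rmod[OF dv True]] bA_e[OF True] by simp
      moreover have "bform m G (\<sigma> x) (\<sigma> (unitv i)) = 0" unfolding sx bform_def by simp
      ultimately show ?thesis using c0 by simp
    next
      case False then show ?thesis using x by (auto intro: Rmod_0)
    qed
  qed
  obtain \<alpha> where \<alpha>R: "\<forall>j. \<forall>l<m. \<alpha> j l \<in> int_ring v"
    and \<alpha>: "\<forall>k<n. \<forall>j. (\<Sum>l<m. \<sigma> (unitv k) l * \<alpha> j l) = unitv k j"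
    using primitive_dual[OF dv rep ds s0] by blast
  define s where "s k = \<sigma> (unitv k)" for k
  define wv where "wv j = (\<lambda>t. \<Sum>l<m. \<alpha> j l * W l t)" for j
  have bwv: "bform m G x (wv j) = (\<Sum>l<m. \<alpha> j l * x l)" for x j
    unfolding wv_def bform_lin2 using W by simp
  have F1: "bform m G (s i) (s k) = (if i = k then c else 0)" if "i < n" "k < n" for i k
    unfolding s_def using sform[OF unitv_Rmod[OF dv that(1)] unitv_Rmod[OF dv that(2)]]
      bform_ee[OF that, of A] by (simp add: A_def)
  have F2: "bform m G (s i) (wv j) = unitv i j" if "i < n" for i j
    unfolding bwv s_def using \<alpha> that by (simp add: mult_ac)
  define \<beta> where "\<beta> k j = bform m G (wv k) (wv j)" for k j
  have \<beta>v: "vge v (- int d) (\<beta> k j)" for k j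
    unfolding \<beta>_def bwv
  proof (intro vge_sum[OF dv])
    fix l assume l: "l \<in> {..<m}"
    have a: "vge v 0 (\<alpha> j l)" using \<alpha>R l int_ring_vge[OF dv] by auto
    have "vge v (- int d) (wv k l)" unfolding wv_def
    proof (intro vge_sum[OF dv])
      fix l' assume l': "l' \<in> {..<m}"
      have "vge v 0 (\<alpha> k l')" using \<alpha>R l' int_ring_vge[OF dv] by auto
      then show "vge v (- int d) (\<alpha> k l' * W l' l)" using vge_mult[OF dv _ Wd[rule_format]] by fastforce
    qed
    then show "vge v (- int d) (\<alpha> j l * wv k l)" using vge_mult[OF dv a] by fastforce
  qed
  define V where "V k = (if k < n then s k else wv (k - n))" for k
  obtain a where a: "\<exists>k\<in>{..<2 * n}. a k \<noteq> 0" "\<forall>t<m. (\<Sum>k\<in>{..<2 * n}. a k * V k t) = 0"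
    using exists_dep[of "{..<2 * n}" m V] small by auto
  define X where "X = (\<lambda>t. \<Sum>k\<in>{..<2 * n}. a k * V k t)"
  have X0: "bform m G z X = 0" "bform m G X z = 0" for z
  proof -
    have "bform m G z X = bform m G z (\<lambda>_. 0)" using a(2) unfolding X_def by (intro bform_cong) auto
    then show "bform m G z X = 0" unfolding bform_def by simp
    have "bform m G X z = bform m G (\<lambda>_. 0) z" using a(2) unfolding X_def by (intro bform_cong) auto
    then show "bform m G X z = 0" unfolding bform_def by simp
  qed
  have E1: "a (j + n) = - c * a j" if j: "j < n" for j
  proof -
    have "0 = bform m G (s j) X" using X0 by simp
    also have "\<dots> = (\<Sum>k<2 * n. a k * bform m G (s j) (V k))" unfolding X_def bform_lin2 by simp
    also have "\<dots> = (\<Sum>k<n. a k * bform m G (s j) (s k)) + (\<Sum>k<n. a (k + n) * bform m G (s j) (wv k))"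
      unfolding sum_2n V_def by simp
    also have "(\<Sum>k<n. a k * bform m G (s j) (s k)) = (\<Sum>k<n. if k = j then a k * c else 0)"
      using F1 j by (intro sum.cong) auto
    also have "\<dots> = a j * c" using j by simp
    also have "(\<Sum>k<n. a (k + n) * bform m G (s j) (wv k)) = (\<Sum>k<n. if k = j then a (k + n) else 0)"
      using F2 j by (intro sum.cong) (auto simp: unitv_def)
    also have "\<dots> = a (j + n)" using j by simp
    finally show ?thesis by (simp add: algebra_simps eq_neg_iff_add_eq_0)
  qed
  have E2: "a j = (\<Sum>k<n. c * a k * \<beta> k j)" if j: "j < n" for j
  proof -
    have "0 = bform m G X (wv j)" using X0 by simp
    also have "\<dots> = (\<Sum>k<2 * n. a k * bform m G (V k) (wv j))" unfolding X_def bform_lin1 by simp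
    also have "\<dots> = (\<Sum>k<n. a k * bform m G (s k) (wv j)) + (\<Sum>k<n. a (k + n) * \<beta> k j)"
      unfolding sum_2n V_def \<beta>_def by simp
    also have "(\<Sum>k<n. a k * bform m G (s k) (wv j)) = (\<Sum>k<n. if k = j then a k else 0)"
      using F2 j by (intro sum.cong) (auto simp: unitv_def)
    also have "\<dots> = a j" using j by simp
    also have "(\<Sum>k<n. a (k + n) * \<beta> k j) = - (\<Sum>k<n. c * a k * \<beta> k j)"
      unfolding sum_negf[symmetric] using E1 by (intro sum.cong) auto
    finally show ?thesis by (simp add: eq_neg_iff_add_eq_0)
  qed
  define S where "S = {j. j < n \<and> a j \<noteq> 0}"
  have Sne: "S \<noteq> {}"
  proof -
    from a(1) obtain k where k: "k < 2 * n" "a k \<noteq> 0" by auto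
    show ?thesis
    proof (cases "k < n")
      case True then show ?thesis using k unfolding S_def by auto
    next
      case False
      have kn: "k - n < n" using False k by auto
      have "a ((k - n) + n) = - c * a (k - n)" using E1[OF kn] .
      moreover have "(k - n) + n = k" using False by simp
      ultimately have "a (k - n) \<noteq> 0" using k by auto
      then show ?thesis using \<open>k - n < n\<close> unfolding S_def by auto
    qed
  qed
  have Sfin: "finite S" unfolding S_def by simp
  define j0 where "j0 = arg_min_on (\<lambda>j. v (a j)) S"
  have j0S: "j0 \<in> S" unfolding j0_def using arg_min_if_finite(1)[OF Sfin Sne] .
  have j0min: "v (a j0) \<le> v (a j)" if "j \<in> S" for j
    unfolding j0_def using arg_min_least[OF Sfin Sne that] .
  have allv: "vge v (v (a j0)) (a k)" if "k < n" for k
    using j0min[of k] that unfolding vge_def S_def by auto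
  have "vge v (v (a j0) + 1) (\<Sum>k<n. c * a k * \<beta> k j0)"
  proof (intro vge_sum[OF dv])
    fix k assume "k \<in> {..<n}"
    then have "vge v ((int d + 1) + v (a j0) + (- int d)) (c * a k * \<beta> k j0)"
      using vge_mult[OF dv vge_mult[OF dv cv allv] \<beta>v] by simp
    then show "vge v (v (a j0) + 1) (c * a k * \<beta> k j0)" by (simp add: algebra_simps)
  qed
  then have "vge v (v (a j0) + 1) (a j0)" using E2 j0S unfolding S_def by simp
  then show False using j0S unfolding vge_def S_def by simp
qed



theorem mainTheorem4:
  fixes v :: "'a::field \<Rightarrow> int" and n :: nat
  assumes "nonarch_local_field v"
    and "(2::'a) \<noteq> 0"
    and "prime_elem_in (int_ring v) 2"
    and "0 < n"
  shows "(\<exists>G. even_lattice v (2 * n) G \<and> prim_universal_even v n (2 * n) G) \<and>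
         (\<forall>m G. even_lattice v m G \<and> prim_universal_even v n m G \<longrightarrow> 2 * n \<le> m)"
proof
  have dv: "discrete_valuation v" using assms(1) unfolding nonarch_local_field_def by blast
  show "\<exists>G. even_lattice v (2 * n) G \<and> prim_universal_even v n (2 * n) G"
  proof (intro exI conjI)
    show "even_lattice v (2 * n) (G0 n)" by (rule G0_even[OF dv])
    show "prim_universal_even v n (2 * n) (G0 n)"
      unfolding prim_universal_even_def using G0_prim[OF dv assms(2)] by blast
  qed
  show "\<forall>m G. even_lattice v m G \<and> prim_universal_even v n m G \<longrightarrow> 2 * n \<le> m"
    using lower_bound[OF dv assms(2)] by blast
qed

end
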